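(* Let $d\ge 3$, $g\ge d$, and write $g=k(d-1)+s$ with $k\ge1$ and $0\le s\le d-2$; put $b=2g+2d-2$. Among all $(d-1)$-tuples that are acceptable for $(d,g)$ and have $a_1=k$, the unique one maximizing $\sum_{i=1}^{d-1}(d-i)a_i$ is: (1) if $s\le d-4$: $(k,(k+1)^{d-s-3},(k+2)^{s+1})$; (2) if $s=d-3$ and $g\neq 2(d-2)$: $(k,(k+2)^{d-2})$; (3) if $s=d-2$, $g\ne 2d-3$ and $(d,g)\ne(3,5)$: $(k,(k+2)^{d-3},k+3)$. (Here $x^m$ denotes $m$ consecutive entries equal to $x$.)
   Context: A non-decreasing $(d-1)$-tuple of natural numbers $(a_1,\dots,a_{d-1})$ with $\sum_{i=1}^{d-1}a_i=b/2$ (where $b=2g+2d-2$, so $b/2=(k+1)(d-1)+s$) is called acceptable for $(d,g)$ if (i) $a_1\ge b/(d(d-1))$; (ii) $a_{d-1}\le b/d$; (iii) $a_{i+1}-a_i\le a_1$ for all $i$. *)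

theory Defs
  imports Complex_Main
begin

text \<open>A (d-1)-tuple (a_1,...,a_{d-1}) is represented as a list a of length d-1,
  with a_i = a ! (i-1). b = 2g + 2d - 2.\<close>

definition bval :: "nat \<Rightarrow> nat \<Rightarrow> nat" where
  "bval d g = 2 * g + 2 * d - 2"

definition acceptable :: "nat \<Rightarrow> nat \<Rightarrow> nat list \<Rightarrow> bool" where
  "acceptable d g a \<longleftrightarrow>
     length a = d - 1 \<and> sorted a \<and>
     2 * sum_list a = bval d g \<and>
     real (a ! 0) \<ge> real (bval d g) / (real d * (real d - 1)) \<and>
     real (a ! (d - 2)) \<le> real (bval d g) / real d \<and>
     (\<forall>i. i + 1 < d - 1 \<longrightarrow> a ! (i + 1) - a ! i \<le> a ! 0)"

definition weight :: "nat \<Rightarrow> nat list \<Rightarrow> nat" where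
  "weight d a = (\<Sum>i<d - 1. (d - 1 - i) * a ! i)"

definition unique_max :: "nat \<Rightarrow> nat \<Rightarrow> nat \<Rightarrow> nat list \<Rightarrow> bool" where
  "unique_max d g k t \<longleftrightarrow>
     acceptable d g t \<and> t ! 0 = k \<and>
     (\<forall>a. acceptable d g a \<and> a ! 0 = k \<and> a \<noteq> t \<longrightarrow> weight d a < weight d t)"

end

theory Submission
  imports Defs
begin

lemma weight_prefix:
  fixes x :: "nat \<Rightarrow> nat"
  shows "(\<Sum>i<N. (N - i) * x i) = (\<Sum>m<N. \<Sum>i<Suc m. x i)"
proof (induction N)
  case 0 then show ?case by simp
next
  case (Suc N)
  have "(\<Sum>i<Suc N. (Suc N - i) * x i) = (\<Sum>i<N. (Suc N - i) * x i) + x N" by simp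
  also have "(\<Sum>i<N. (Suc N - i) * x i) = (\<Sum>i<N. (N - i) * x i + x i)"
    by (rule sum.cong) (auto simp: Suc_diff_le)
  also have "\<dots> = (\<Sum>i<N. (N - i) * x i) + (\<Sum>i<N. x i)" by (simp add: sum.distrib)
  finally show ?case using Suc by simp
qed

lemma prefix_bound:
  fixes y :: "nat \<Rightarrow> nat"
  assumes mono: "\<And>i j. i \<le> j \<Longrightarrow> j < n \<Longrightarrow> y i \<le> y j"
    and sum: "(\<Sum>i<n. y i) = q * n + r" and rn: "r \<le> n" and "m \<le> n"
  shows "(\<Sum>i<m. y i) \<le> m * q + (m - (n - r))"
proof (cases m)
  case 0 then show ?thesis by simp
next
  case (Suc m')
  show ?thesis
  proof (cases "y m' \<le> q")
    case True
    have "(\<Sum>i<m. y i) \<le> (\<Sum>i<m. q)"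
    proof (rule sum_mono)
      fix i assume "i \<in> {..<m}"
      then have "i \<le> m'" using Suc by simp
      moreover have "m' < n" using Suc assms(4) by simp
      ultimately show "y i \<le> q" using mono True by (meson order_trans)
    qed
    then show ?thesis by simp
  next
    case False
    have "(\<Sum>i\<in>{m..<n}. Suc q) \<le> (\<Sum>i\<in>{m..<n}. y i)"
    proof (rule sum_mono)
      fix i assume "i \<in> {m..<n}"
      then have "m' \<le> i" "i < n" using Suc by auto
      then show "Suc q \<le> y i" using mono[of m' i] False by simp
    qed
    hence A: "(n - m) * Suc q \<le> (\<Sum>i\<in>{m..<n}. y i)" by simp
    have "(\<Sum>i<n. y i) = (\<Sum>i<m. y i) + (\<Sum>i\<in>{m..<n}. y i)"
      using assms(4) by (metis atLeast0LessThan sum.atLeastLessThan_concat zero_le)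
    hence B: "(\<Sum>i<m. y i) + (n - m) * Suc q \<le> q * n + r" using A sum by linarith
    obtain p where p: "n = m + p" using assms(4) le_Suc_ex by blast
    have "q * n = m * q + p * q" using p by (simp add: algebra_simps)
    hence "(\<Sum>i<m. y i) + p * q + p \<le> m * q + p * q + r" using B p by simp
    then have "(\<Sum>i<m. y i) + p \<le> m * q + r" by simp
    moreover have "m - (n - r) = r - p" using p rn by simp
    ultimately show ?thesis by linarith
  qed
qed

lemma prefix_target:
  "(\<Sum>i<m. (if i < n - r then q else Suc q)) = m * q + (m - (n - r))"
  by (induction m) auto

lemma gen_t:
  assumes "r \<le> n" "k \<le> q" "t = [k] @ replicate (n - r) q @ replicate r (Suc q)"
  shows "length t = Suc n" "sorted t" "t ! 0 = k" "sum_list t = k + q * n + r"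
    "\<And>i. i < n \<Longrightarrow> t ! (Suc i) = (if i < n - r then q else Suc q)"
proof -
  show "length t = Suc n" using assms by simp
  show "sorted t" using assms by (auto simp: sorted_append)
  show "t ! 0 = k" using assms by simp
  have "(n - r) * q + r * q = n * q" using assms(1)
    by (metis add_mult_distrib le_add_diff_inverse2)
  moreover have "sum_list t = k + (n - r) * q + r * Suc q" using assms by (simp add: sum_list_replicate)
  ultimately show "sum_list t = k + q * n + r" by (simp add: mult.commute)
  show "\<And>i. i < n \<Longrightarrow> t ! (Suc i) = (if i < n - r then q else Suc q)"
    using assms by (auto simp: nth_append)
qed

lemma gen_max:
  fixes a t :: "nat list"
  assumes len: "length a = Suc n" and srt: "sorted a" and a0: "a ! 0 = k"
    and sa: "sum_list a = k + q * n + r" and rn: "r \<le> n" and kq: "k \<le> q"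
    and tdef: "t = [k] @ replicate (n - r) q @ replicate r (Suc q)" and ne: "a \<noteq> t"
  shows "(\<Sum>i<Suc n. (Suc n - i) * a ! i) < (\<Sum>i<Suc n. (Suc n - i) * t ! i)"
proof -
  note T = gen_t[OF rn kq tdef]
  define y where "y i = a ! Suc i" for i
  define z where "z i = (if i < n - r then q else Suc q)" for i
  have mono: "\<And>i j. i \<le> j \<Longrightarrow> j < n \<Longrightarrow> y i \<le> y j"
    unfolding y_def using srt len by (simp add: sorted_iff_nth_mono)
  have "sum_list a = (\<Sum>i<Suc n. a ! i)"
    using len by (simp add: sum_list_sum_nth atLeast0LessThan)
  also have "\<dots> = a ! 0 + (\<Sum>i<n. y i)" unfolding y_def by (rule sum.lessThan_Suc_shift)
  finally have ys: "(\<Sum>i<n. y i) = q * n + r" using sa a0 by simp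
  have bnd: "\<And>m. m \<le> n \<Longrightarrow> (\<Sum>i<m. y i) \<le> (\<Sum>i<m. z i)"
    using prefix_bound[OF mono ys rn] unfolding z_def prefix_target by blast
  have tz: "\<And>i. i < n \<Longrightarrow> t ! Suc i = z i" using T(5) z_def by simp
  have Wa: "(\<Sum>i<Suc n. (Suc n - i) * a ! i) = (\<Sum>m<Suc n. k + (\<Sum>i<m. y i))"
    using weight_prefix[of "Suc n" "\<lambda>i. a ! i"] a0 unfolding y_def
    by (simp add: sum.lessThan_Suc_shift del: sum.lessThan_Suc)
  have "(\<Sum>i<Suc n. (Suc n - i) * t ! i) = (\<Sum>m<Suc n. k + (\<Sum>i<m. t ! Suc i))"
    using weight_prefix[of "Suc n" "\<lambda>i. t ! i"] T(3)
    by (simp add: sum.lessThan_Suc_shift del: sum.lessThan_Suc)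
  also have "\<dots> = (\<Sum>m<Suc n. k + (\<Sum>i<m. z i))"
    by (rule sum.cong) (auto intro!: sum.cong simp: tz)
  finally have Wt: "(\<Sum>i<Suc n. (Suc n - i) * t ! i) = \<dots>" .
  have "\<exists>m\<in>{..<Suc n}. k + (\<Sum>i<m. y i) < k + (\<Sum>i<m. z i)"
  proof (rule ccontr)
    assume "\<not> ?thesis"
    hence eq: "\<And>m. m \<le> n \<Longrightarrow> (\<Sum>i<m. y i) = (\<Sum>i<m. z i)"
      using bnd by (meson le_antisym lessThan_iff less_Suc_eq_le nat_add_left_cancel_less not_le)
    have "\<And>i. i < n \<Longrightarrow> y i = z i"
    proof -
      fix i assume "i < n"
      have A: "(\<Sum>j<Suc i. y j) = (\<Sum>j<Suc i. z j)" by (rule eq) (use \<open>i < n\<close> in simp)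
      have B: "(\<Sum>j<i. y j) = (\<Sum>j<i. z j)" by (rule eq) (use \<open>i < n\<close> in simp)
      show "y i = z i" using A B by simp
    qed
    hence "a = t"
      apply (intro nth_equalityI)
      using len T(1) a0 T(3) tz unfolding y_def
      by (auto simp: less_Suc_eq_0_disj)
    then show False using ne by simp
  qed
  hence "(\<Sum>m<Suc n. k + (\<Sum>i<m. y i)) < (\<Sum>m<Suc n. k + (\<Sum>i<m. z i))"
    by (intro sum_strict_mono_ex1) (auto simp: bnd)
  then show ?thesis using Wa Wt by simp
qed


lemma gen_gap:
  assumes rn: "r \<le> n" and kq: "k \<le> q" and tdef: "t = [k] @ replicate (n - r) q @ replicate r (Suc q)"
    and k1: "1 \<le> k" and gap0: "(if 0 < n - r then q else Suc q) \<le> 2 * k"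
  shows "\<forall>i. i + 1 < Suc n \<longrightarrow> t ! (i + 1) - t ! i \<le> t ! 0"
proof (intro allI impI)
  note T = gen_t[OF rn kq tdef]
  fix i assume i: "i + 1 < Suc n"
  show "t ! (i + 1) - t ! i \<le> t ! 0"
  proof (cases i)
    case 0
    then show ?thesis using T(3) T(5)[of 0] i gap0 by (auto split: if_splits)
  next
    case (Suc j)
    then show ?thesis using T(3) T(5)[of j] T(5)[of "Suc j"] i k1 by (auto split: if_splits)
  qed
qed

lemma minconv:
  assumes "d \<ge> 2" "B \<le> x * (d * (d - 1))"
  shows "real B / (real d * (real d - 1)) \<le> real x"
proof -
  have e: "real d - 1 = real (d - 1)" using assms by simp
  have pos: "real d * (real d - 1) > 0" using assms by simp
  have "real B \<le> real x * (real d * (real d - 1))"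
    unfolding e using assms(2) by (metis of_nat_le_iff of_nat_mult)
  then show ?thesis using pos by (simp add: divide_le_eq)
qed

lemma maxconv:
  assumes "d \<ge> 1" "x * d \<le> B"
  shows "real x \<le> real B / real d"
proof -
  have "real x * real d \<le> real B" using assms(2) by (metis of_nat_le_iff of_nat_mult)
  then show ?thesis using assms(1) by (simp add: le_divide_eq)
qed

lemma gen_acc:
  assumes d3: "d \<ge> 3" and nd: "n = d - 2" and rn: "r \<le> n" and kq: "k \<le> q"
    and tdef: "t = [k] @ replicate (n - r) q @ replicate r (Suc q)"
    and k1: "1 \<le> k" and gap0: "(if 0 < n - r then q else Suc q) \<le> 2 * k"
    and bs: "2 * (k + q * n + r) = bval d g"
    and bmin: "bval d g \<le> k * (d * (d - 1))"
    and bmax: "(if r = 0 then q else Suc q) * d \<le> bval d g"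
  shows "acceptable d g t"
proof -
  note T = gen_t[OF rn kq tdef]
  have dn: "d - 1 = Suc n" "d - 2 = n" using nd d3 by auto
  have last: "t ! (d - 2) = (if r = 0 then q else Suc q)"
  proof -
    have "n = Suc (n - 1)" using nd d3 by simp
    then have "t ! n = t ! Suc (n - 1)" by simp
    also have "\<dots> = (if n - 1 < n - r then q else Suc q)" using T(5)[of "n - 1"] nd d3 by simp
    also have "\<dots> = (if r = 0 then q else Suc q)" using nd d3 by auto
    finally show ?thesis using dn by simp
  qed
  show ?thesis unfolding acceptable_def
    using T(1,2,3,4) dn bs minconv[OF _ bmin] maxconv[OF _ bmax] last d3
      gen_gap[OF rn kq tdef k1 gap0] by auto
qed

lemma gen_unique:
  assumes d3: "d \<ge> 3" and nd: "n = d - 2" and rn: "r \<le> n" and kq: "k \<le> q"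
    and tdef: "t = [k] @ replicate (n - r) q @ replicate r (Suc q)"
    and bs: "2 * (k + q * n + r) = bval d g"
    and acc: "acceptable d g t"
  shows "unique_max d g k t"
proof -
  note T = gen_t[OF rn kq tdef]
  have dn: "d - 1 = Suc n" using nd d3 by auto
  show ?thesis unfolding unique_max_def
  proof (intro conjI allI impI)
    show "acceptable d g t" by (rule acc)
    show "t ! 0 = k" by (rule T(3))
    fix a assume a: "acceptable d g a \<and> a ! 0 = k \<and> a \<noteq> t"
    then have "length a = Suc n" "sorted a" "sum_list a = k + q * n + r"
      using dn bs unfolding acceptable_def by auto
    from gen_max[OF this(1,2) _ this(3) rn kq tdef] a
    show "weight d a < weight d t" unfolding weight_def dn by auto
  qed
qed



theorem mainTheorem4:
  fixes d g k s :: nat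
  assumes "d \<ge> 3" and "g \<ge> d" and "g = k * (d - 1) + s" and "k \<ge> 1" and "s \<le> d - 2"
  shows "(s + 4 \<le> d \<longrightarrow>
            unique_max d g k ([k] @ replicate (d - s - 3) (k + 1) @ replicate (s + 1) (k + 2)))
       \<and> (s + 3 = d \<and> g \<noteq> 2 * (d - 2) \<longrightarrow>
            unique_max d g k ([k] @ replicate (d - 2) (k + 2)))
       \<and> (s + 2 = d \<and> g \<noteq> 2 * d - 3 \<and> (d, g) \<noteq> (3, 5) \<longrightarrow>
            unique_max d g k ([k] @ replicate (d - 3) (k + 2) @ [k + 3]))"
proof (intro conjI impI)
  assume c: "s + 4 \<le> d"
  from c obtain f where d: "d = s + f + 4" by (auto simp: le_iff_add)
  from assms(4) obtain k' where k: "k = k' + 1" by (auto simp: le_iff_add)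
  have d1: "d - 1 = s + f + 3" and d2: "d - 2 = s + f + 2" using d by auto
  have tdef: "[k] @ replicate (d - s - 3) (k + 1) @ replicate (s + 1) (k + 2)
      = [k] @ replicate ((d - 2) - (s + 1)) (k + 1) @ replicate (s + 1) (Suc (k + 1))"
    using d by simp
  have bs: "2 * (k + (k + 1) * (d - 2) + (s + 1)) = bval d g"
    unfolding bval_def assms(3) d1 d2 unfolding d k by (simp add: algebra_simps)
  have bmin: "bval d g \<le> k * (d * (d - 1))"
    unfolding bval_def assms(3) d1 d2 unfolding d k by (simp add: algebra_simps)
  have bmax: "(if s + 1 = 0 then k + 1 else Suc (k + 1)) * d \<le> bval d g"
    unfolding bval_def assms(3) d1 d2 unfolding d k by (simp add: algebra_simps)
  have gap0: "(if 0 < (d - 2) - (s + 1) then k + 1 else Suc (k + 1)) \<le> 2 * k"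
    using d k by simp
  have rn: "s + 1 \<le> d - 2" using d by simp
  have kq: "k \<le> k + 1" by simp
  show "unique_max d g k ([k] @ replicate (d - s - 3) (k + 1) @ replicate (s + 1) (k + 2))"
    unfolding tdef
    by (rule gen_unique[OF assms(1) refl rn kq refl bs
          gen_acc[OF assms(1) refl rn kq refl assms(4) gap0 bs bmin bmax]])
next
  assume c: "s + 3 = d \<and> g \<noteq> 2 * (d - 2)"
  from assms(1) obtain e where d: "d = e + 3" by (auto simp: le_iff_add)
  have se: "s = e" using c d by simp
  have "k \<noteq> 1" using c assms(3) d se by auto
  with assms(4) have "2 \<le> k" by simp
  then obtain k' where k: "k = k' + 2" by (auto simp: le_iff_add)
  have d1: "d - 1 = e + 2" and d2: "d - 2 = e + 1" using d by auto
  have tdef: "[k] @ replicate (d - 2) (k + 2)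
      = [k] @ replicate ((d - 2) - 0) (k + 2) @ replicate 0 (Suc (k + 2))" by simp
  have bs: "2 * (k + (k + 2) * (d - 2) + 0) = bval d g"
    unfolding bval_def assms(3) d1 d2 unfolding d k se by (simp add: algebra_simps)
  have bmin: "bval d g \<le> k * (d * (d - 1))"
    unfolding bval_def assms(3) d1 d2 unfolding d k se by (simp add: algebra_simps)
  have bmax: "(if (0::nat) = 0 then k + 2 else Suc (k + 2)) * d \<le> bval d g"
    unfolding bval_def assms(3) d1 d2 unfolding d k se by (simp add: algebra_simps)
  have gap0: "(if 0 < (d - 2) - 0 then k + 2 else Suc (k + 2)) \<le> 2 * k"
    using d k by simp
  have rn: "0 \<le> d - 2" by simp
  have kq: "k \<le> k + 2" by simp
  show "unique_max d g k ([k] @ replicate (d - 2) (k + 2))"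
    unfolding tdef
    by (rule gen_unique[OF assms(1) refl rn kq refl bs
          gen_acc[OF assms(1) refl rn kq refl assms(4) gap0 bs bmin bmax]])
next
  assume c: "s + 2 = d \<and> g \<noteq> 2 * d - 3 \<and> (d, g) \<noteq> (3, 5)"
  from assms(1) obtain e where d: "d = e + 3" by (auto simp: le_iff_add)
  have se: "s = e + 1" using c d by simp
  have "k \<noteq> 1" using c assms(3) d se by auto
  with assms(4) have "2 \<le> k" by simp
  then obtain k' where k: "k = k' + 2" by (auto simp: le_iff_add)
  have e0: "e = 0 \<Longrightarrow> k' \<noteq> 0" using c assms(3) d se k by auto
  have d1: "d - 1 = e + 2" and d2: "d - 2 = e + 1" using d by auto
  have tdef: "[k] @ replicate (d - 3) (k + 2) @ [k + 3]
      = [k] @ replicate ((d - 2) - 1) (k + 2) @ replicate 1 (Suc (k + 2))"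
    using d by (simp add: numeral_eq_Suc)
  have bs: "2 * (k + (k + 2) * (d - 2) + 1) = bval d g"
    unfolding bval_def assms(3) d1 d2 unfolding d k se by (simp add: algebra_simps)
  have bmin: "bval d g \<le> k * (d * (d - 1))"
  proof (cases "e = 0")
    case True
    then obtain j where j: "k' = j + 1" using e0 by (metis Suc_eq_plus1 not0_implies_Suc)
    show ?thesis unfolding bval_def assms(3) d1 d2 unfolding d k se True j by (simp add: algebra_simps)
  next
    case False
    then obtain j where j: "e = j + 1" by (metis Suc_eq_plus1 not0_implies_Suc)
    show ?thesis unfolding bval_def assms(3) d1 d2 unfolding d k se j by (simp add: algebra_simps)
  qed
  have bmax: "(if (1::nat) = 0 then k + 2 else Suc (k + 2)) * d \<le> bval d g"
  proof (cases "e = 0")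
    case True
    then obtain j where j: "k' = j + 1" using e0 by (metis Suc_eq_plus1 not0_implies_Suc)
    show ?thesis unfolding bval_def assms(3) d1 d2 unfolding d k se True j by (simp add: algebra_simps)
  next
    case False
    then obtain j where j: "e = j + 1" by (metis Suc_eq_plus1 not0_implies_Suc)
    show ?thesis unfolding bval_def assms(3) d1 d2 unfolding d k se j by (simp add: algebra_simps)
  qed
  have gap0: "(if 0 < (d - 2) - 1 then k + 2 else Suc (k + 2)) \<le> 2 * k"
    using d k e0 by auto
  have rn: "1 \<le> d - 2" using d by simp
  have kq: "k \<le> k + 2" by simp
  show "unique_max d g k ([k] @ replicate (d - 3) (k + 2) @ [k + 3])"
    unfolding tdef
    by (rule gen_unique[OF assms(1) refl rn kq refl bs
          gen_acc[OF assms(1) refl rn kq refl assms(4) gap0 bs bmin bmax]])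
qed

end
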